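(* Under the standing setting and assumptions (A1)–(A3) described in the context, assume $\mathcal A$ is star-shaped and $\mathcal A\cap\ker(\pi)=\{0\}$ (absence of good deals). Then $\mathcal R(X)\neq\emptyset$ for every $X\in\mathcal X$.
   Context: Let $\mathcal X$ be a Hausdorff, first countable, locally convex topological vector space over $\mathbb R$, partially ordered by a partial order $\geq$ with positive cone $\mathcal X_+=\{X\in\mathcal X: X\geq 0\}$. Let $\mathcal M\subset\mathcal X$ be a vector subspace with $1<\dim\mathcal M<\infty$, carrying the relative topology, and let $\pi:\mathcal M\to\mathbb R$ be linear with $\ker(\pi)=\{Z\in\mathcal M:\pi(Z)=0\}$. Standing assumptions: (A1) there is $U\in\mathcal M\cap\mathcal X_+$ with $\pi(U)=1$; (A2) $\mathcal A\subsetneq\mathcal X$ is closed, contains $0$, and satisfies $\mathcal A+\mathcal X_+\subset\mathcal A$; (A3) the map $\rho(X)=\inf\{\pi(Z): Z\in\mathcal M,\ X+Z\in\mathcal A\}$ is finitely valued and continuous on $\mathcal X$. The optimal payoff map is $\mathcal R(X)=\{Z\in\mathcal M: X+Z\in\mathcal A,\ \pi(Z)=\rho(X)\}$. $\mathcal A$ is star-shaped if $X\in\mathcal A$ implies $\lambda X\in\mathcal A$ for all $\lambda\in[0,1]$. *)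

theory Defs
  imports "HOL-Analysis.Analysis"
begin

definition tvs :: "'a::{real_vector,topological_space} itself \<Rightarrow> bool" where
  "tvs _ \<longleftrightarrow> continuous_on UNIV (\<lambda>(x::'a, y::'a). x + y)
            \<and> continuous_on UNIV (\<lambda>(c::real, x::'a). c *\<^sub>R x)"

definition locally_convex :: "'a::{real_vector,topological_space} itself \<Rightarrow> bool" where
  "locally_convex _ \<longleftrightarrow> (\<forall>W::'a set. open W \<and> 0 \<in> W \<longrightarrow>
       (\<exists>V. open V \<and> convex V \<and> 0 \<in> V \<and> V \<subseteq> W))"

definition ordered_vs :: "('a::real_vector \<Rightarrow> 'a \<Rightarrow> bool) \<Rightarrow> bool" where
  "ordered_vs le \<longleftrightarrow> (\<forall>x. le x x) \<and> (\<forall>x y. le x y \<and> le y x \<longrightarrow> x = y)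
     \<and> (\<forall>x y z. le x y \<and> le y z \<longrightarrow> le x z)
     \<and> (\<forall>x y z. le x y \<longrightarrow> le (x + z) (y + z))
     \<and> (\<forall>x y (c::real). le x y \<and> 0 \<le> c \<longrightarrow> le (c *\<^sub>R x) (c *\<^sub>R y))"

definition pos_cone :: "('a::real_vector \<Rightarrow> 'a \<Rightarrow> bool) \<Rightarrow> 'a set" where
  "pos_cone le = {X. le 0 X}"

definition linear_on :: "'a::real_vector set \<Rightarrow> ('a \<Rightarrow> real) \<Rightarrow> bool" where
  "linear_on M \<pi> \<longleftrightarrow> (\<forall>x\<in>M. \<forall>y\<in>M. \<pi> (x + y) = \<pi> x + \<pi> y)
                    \<and> (\<forall>x\<in>M. \<forall>c. \<pi> (c *\<^sub>R x) = c * \<pi> x)"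

definition kerM :: "'a::real_vector set \<Rightarrow> ('a \<Rightarrow> real) \<Rightarrow> 'a set" where
  "kerM M \<pi> = {Z \<in> M. \<pi> Z = 0}"

definition prices :: "'a::real_vector set \<Rightarrow> ('a \<Rightarrow> real) \<Rightarrow> 'a set \<Rightarrow> 'a \<Rightarrow> real set" where
  "prices M \<pi> A X = {\<pi> Z | Z. Z \<in> M \<and> X + Z \<in> A}"

definition rho :: "'a::real_vector set \<Rightarrow> ('a \<Rightarrow> real) \<Rightarrow> 'a set \<Rightarrow> 'a \<Rightarrow> real" where
  "rho M \<pi> A X = Inf (prices M \<pi> A X)"

definition optR :: "'a::real_vector set \<Rightarrow> ('a \<Rightarrow> real) \<Rightarrow> 'a set \<Rightarrow> 'a \<Rightarrow> 'a set" where
  "optR M \<pi> A X = {Z \<in> M. X + Z \<in> A \<and> \<pi> Z = rho M \<pi> A X}"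

definition star_shaped :: "'a::real_vector set \<Rightarrow> bool" where
  "star_shaped A \<longleftrightarrow> (\<forall>X\<in>A. \<forall>t::real. 0 \<le> t \<and> t \<le> 1 \<longrightarrow> t *\<^sub>R X \<in> A)"

end

theory Submission imports Defs begin

lemma tvs_add:
  fixes f g :: "'b \<Rightarrow> 'a::{real_vector,t2_space}"
  assumes tvs: "tvs TYPE('a)" and f: "(f \<longlongrightarrow> a) F" and g: "(g \<longlongrightarrow> b) F"
  shows "((\<lambda>x. f x + g x) \<longlongrightarrow> a + b) F"
proof -
  have "continuous_on UNIV (\<lambda>(x::'a, y::'a). x + y)" using tvs by (simp add: tvs_def)
  hence "isCont (\<lambda>(x::'a, y::'a). x + y) (a, b)"
    using continuous_on_eq_continuous_at[OF open_UNIV] by blast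
  from isCont_tendsto_compose[OF this tendsto_Pair[OF f g]] show ?thesis by simp
qed

lemma tvs_scale:
  fixes f :: "'b \<Rightarrow> 'a::{real_vector,t2_space}" and c :: "'b \<Rightarrow> real"
  assumes tvs: "tvs TYPE('a)" and c: "(c \<longlongrightarrow> d) F" and f: "(f \<longlongrightarrow> a) F"
  shows "((\<lambda>x. c x *\<^sub>R f x) \<longlongrightarrow> d *\<^sub>R a) F"
proof -
  have "continuous_on UNIV (\<lambda>(c::real, x::'a). c *\<^sub>R x)" using tvs by (simp add: tvs_def)
  hence "isCont (\<lambda>(c::real, x::'a). c *\<^sub>R x) (d, a)"
    using continuous_on_eq_continuous_at[OF open_UNIV] by blast
  from isCont_tendsto_compose[OF this tendsto_Pair[OF c f]] show ?thesis by simp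
qed

lemma tvs_sum:
  fixes f :: "'i \<Rightarrow> 'b \<Rightarrow> 'a::{real_vector,t2_space}"
  assumes tvs: "tvs TYPE('a)" and fin: "finite I"
  shows "(\<forall>i\<in>I. (f i \<longlongrightarrow> a i) F) \<Longrightarrow> ((\<lambda>x. \<Sum>i\<in>I. f i x) \<longlongrightarrow> (\<Sum>i\<in>I. a i)) F"
  using fin
proof (induction I rule: finite_induct)
  case empty
  then show ?case by simp
next
  case (insert j I)
  then show ?case using tvs_add[OF tvs, of "f j" "a j" F "\<lambda>x. \<Sum>i\<in>I. f i x"] by simp
qed

lemma pi_sum:
  assumes M: "subspace M" and lin: "linear_on M \<pi>" and fin: "finite C" and CM: "C \<subseteq> M"
  shows "\<pi> (\<Sum>b\<in>C. u b *\<^sub>R b) = (\<Sum>b\<in>C. u b * \<pi> b)"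
  using fin CM
proof (induction C rule: finite_induct)
  case empty
  have "\<pi> 0 = \<pi> (0 *\<^sub>R 0)" by simp
  also have "\<dots> = 0" using lin M subspace_0 unfolding linear_on_def by fastforce
  finally show ?case by simp
next
  case (insert x F)
  have xM: "u x *\<^sub>R x \<in> M" using insert M subspace_scale by auto
  have sM: "(\<Sum>b\<in>F. u b *\<^sub>R b) \<in> M" using insert M subspace_sum subspace_scale
    by (metis (no_types, lifting) insert_subset subsetD)
  have "\<pi> (\<Sum>b\<in>insert x F. u b *\<^sub>R b) = \<pi> (u x *\<^sub>R x) + \<pi> (\<Sum>b\<in>F. u b *\<^sub>R b)"
    using insert xM sM lin unfolding linear_on_def by simp
  also have "\<dots> = u x * \<pi> x + (\<Sum>b\<in>F. u b * \<pi> b)"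
    using insert lin unfolding linear_on_def by auto
  finally show ?case using insert by simp
qed

lemma coord_compact:
  fixes f :: "nat \<Rightarrow> 'i \<Rightarrow> real"
  assumes fin: "finite I"
  shows "(\<forall>i\<in>I. \<forall>n. \<bar>f n i\<bar> \<le> K) \<Longrightarrow> \<exists>r w. strict_mono r \<and> (\<forall>i\<in>I. (\<lambda>n. f (r n) i) \<longlonglongrightarrow> w i)"
  using fin
proof (induction I rule: finite_induct)
  case empty
  show ?case by (rule exI[of _ id], auto simp: strict_mono_def)
next
  case (insert j I)
  then obtain r w where r: "strict_mono r" and w: "\<forall>i\<in>I. (\<lambda>n. f (r n) i) \<longlonglongrightarrow> w i" by auto
  have "bounded (range (\<lambda>n. f (r n) j))" unfolding bounded_real using insert.prems by auto
  from bounded_imp_convergent_subsequence[OF this] obtain l s where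
    s: "strict_mono s" and l: "((\<lambda>n. f (r n) j) \<circ> s) \<longlonglongrightarrow> l" by blast
  have "\<forall>i\<in>insert j I. (\<lambda>n. f ((r \<circ> s) n) i) \<longlonglongrightarrow> (w(j:=l)) i"
  proof
    fix i assume "i \<in> insert j I"
    then show "(\<lambda>n. f ((r \<circ> s) n) i) \<longlonglongrightarrow> (w(j:=l)) i"
    proof
      assume "i = j" thus ?thesis using l by (simp add: o_def)
    next
      assume iI: "i \<in> I"
      hence "i \<noteq> j" using insert by auto
      with LIMSEQ_subseq_LIMSEQ[OF w[rule_format, OF iI] s] show ?thesis by (simp add: o_def)
    qed
  qed
  then show ?case using strict_mono_o[OF r s] by blast
qed

theorem mainTheorem9:
  fixes le :: "'a::{real_vector,t2_space,first_countable_topology} \<Rightarrow> 'a \<Rightarrow> bool"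
    and M A :: "'a set" and \<pi> :: "'a \<Rightarrow> real"
  assumes tvs: "tvs TYPE('a)" and lc: "locally_convex TYPE('a)"
    and ord: "ordered_vs le"
    and M_sub: "subspace M" and M_fin: "\<exists>B. finite B \<and> M = span B" and M_dim: "1 < dim M"
    and \<pi>_lin: "linear_on M \<pi>"
    and A1: "\<exists>U\<in>M \<inter> pos_cone le. \<pi> U = 1"
    and A2: "closed A" "A \<noteq> UNIV" "0 \<in> A" "\<forall>X\<in>A. \<forall>P\<in>pos_cone le. X + P \<in> A"
    and A3: "\<forall>X. prices M \<pi> A X \<noteq> {} \<and> bdd_below (prices M \<pi> A X)"
            "continuous_on UNIV (rho M \<pi> A)"
    and star: "star_shaped A"
    and nogood: "A \<inter> kerM M \<pi> = {0}"
  shows "\<forall>X. optR M \<pi> A X \<noteq> {}"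
proof
  fix X
  obtain B0 where B0: "finite B0" "M = span B0" using M_fin by blast
  obtain C where C: "C \<subseteq> B0" "independent C" "B0 \<subseteq> span C"
    using maximal_independent_subset[of B0] by blast
  have finC: "finite C" using C(1) B0(1) finite_subset by blast
  have spanC: "span C = M"
  proof (rule subset_antisym)
    have "span C \<subseteq> span B0" using C(1) by (rule span_mono)
    thus "span C \<subseteq> M" using B0(2) by simp
    have "span B0 \<subseteq> span (span C)" using C(3) by (rule span_mono)
    thus "M \<subseteq> span C" using B0(2) span_span[of C] by simp
  qed
  have CM: "C \<subseteq> M" using spanC span_superset by blast
  have LM: "(\<Sum>b\<in>C. u b *\<^sub>R b) \<in> M" for u
    unfolding spanC[symmetric] by (rule span_sum) (auto intro: span_scale span_base)
  have indep: "\<forall>b\<in>C. u b = 0" if "(\<Sum>b\<in>C. u b *\<^sub>R b) = 0" for u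
  proof (rule ccontr)
    assume "\<not> (\<forall>b\<in>C. u b = 0)"
    hence "dependent C" unfolding dependent_finite[OF finC] using that by blast
    thus False using C(2) by simp
  qed
  have piL: "\<pi> (\<Sum>b\<in>C. u b *\<^sub>R b) = (\<Sum>b\<in>C. u b * \<pi> b)" for u
    using pi_sum[OF M_sub \<pi>_lin finC CM] .
  define coef where "coef Z = (SOME u. Z = (\<Sum>b\<in>C. u b *\<^sub>R b))" for Z
  have rep: "Z = (\<Sum>b\<in>C. coef Z b *\<^sub>R b)" if "Z \<in> M" for Z
  proof -
    have "\<exists>u. Z = (\<Sum>b\<in>C. u b *\<^sub>R b)" using that spanC span_finite[OF finC] by auto
    then show ?thesis unfolding coef_def by (rule someI_ex)
  qed
  define N where "N Z = (\<Sum>b\<in>C. \<bar>coef Z b\<bar>)" for Z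
  have cb: "\<bar>coef Z b\<bar> \<le> N Z" if "b \<in> C" for Z b
    unfolding N_def using member_le_sum[OF that, of "\<lambda>b. \<bar>coef Z b\<bar>"] finC by simp
  have trivA: "\<forall>\<^sub>F n in sequentially. P n" if "\<And>n. P n" for P using that by simp

  have bnd: "\<exists>K. \<forall>Z. Z \<in> M \<and> X + Z \<in> A \<and> \<bar>\<pi> Z\<bar> \<le> K0 \<longrightarrow> N Z \<le> K" for K0
  proof (rule ccontr)
    assume "\<not> ?thesis"
    hence H: "\<forall>K. \<exists>Z. Z \<in> M \<and> X + Z \<in> A \<and> \<bar>\<pi> Z\<bar> \<le> K0 \<and> N Z > K"
      by (simp add: not_le)
    have "\<forall>j::nat. \<exists>Z. Z \<in> M \<and> X + Z \<in> A \<and> \<bar>\<pi> Z\<bar> \<le> K0 \<and> N Z > real j + 1"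
    proof
      fix j :: nat show "\<exists>Z. Z \<in> M \<and> X + Z \<in> A \<and> \<bar>\<pi> Z\<bar> \<le> K0 \<and> N Z > real j + 1"
        using H by (rule allE)
    qed
    then have "\<exists>Zs. \<forall>j. Zs j \<in> M \<and> X + Zs j \<in> A \<and> \<bar>\<pi> (Zs j)\<bar> \<le> K0 \<and> N (Zs j) > real j + 1"
      by (rule choice)
    then obtain Zs where "\<forall>j. Zs j \<in> M \<and> X + Zs j \<in> A \<and> \<bar>\<pi> (Zs j)\<bar> \<le> K0 \<and> N (Zs j) > real j + 1" by blast
    hence Zs: "\<And>j. Zs j \<in> M" "\<And>j. X + Zs j \<in> A" "\<And>j. \<bar>\<pi> (Zs j)\<bar> \<le> K0"
       "\<And>j. N (Zs j) > real j + 1" by auto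
    define v where "v j b = coef (Zs j) b / N (Zs j)" for j b
    have Npos: "N (Zs j) > 0" for j using Zs(4)[of j] by linarith
    have vb: "\<forall>b\<in>C. \<forall>n. \<bar>v n b\<bar> \<le> 1"
    proof (intro ballI allI)
      fix b n assume "b \<in> C"
      hence c: "\<bar>coef (Zs n) b\<bar> \<le> N (Zs n)" by (rule cb)
      have p: "0 < N (Zs n)" by (rule Npos)
      have "\<bar>v n b\<bar> = \<bar>coef (Zs n) b\<bar> / N (Zs n)" unfolding v_def using p by (simp add: abs_divide)
      also have "\<dots> \<le> 1" using c p by (simp add: divide_le_eq)
      finally show "\<bar>v n b\<bar> \<le> 1" .
    qed
    obtain r w where r: "strict_mono r" and w: "\<forall>b\<in>C. (\<lambda>n. v (r n) b) \<longlonglongrightarrow> w b"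
      using coord_compact[OF finC vb] by blast
    have inv0: "(\<lambda>n. 1 / N (Zs (r n))) \<longlonglongrightarrow> 0"
    proof -
      have "filterlim (\<lambda>n. N (Zs (r n))) at_top sequentially"
      proof (rule filterlim_at_top_mono[OF filterlim_real_sequentially])
        show "\<forall>\<^sub>F x in sequentially. real x \<le> N (Zs (r x))"
        proof (rule trivA)
          fix n have "real n \<le> real (r n)" using seq_suble[OF r] by simp
          thus "real n \<le> N (Zs (r n))" using Zs(4)[of "r n"] by linarith
        qed
      qed
      from tendsto_inverse_0_at_top[OF this] show ?thesis by (simp add: divide_inverse)
    qed
    define Y where "Y j = (1 / N (Zs j)) *\<^sub>R (X + Zs j)" for j
    have YA: "Y j \<in> A" for j
    proof -
      have "1 / N (Zs j) \<le> 1" using Zs(4)[of j] by simp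
      moreover have "0 \<le> 1 / N (Zs j)" using Npos[of j] by simp
      ultimately show ?thesis using star Zs(2)[of j] unfolding star_shaped_def Y_def by blast
    qed
    have Yeq: "Y j = (1 / N (Zs j)) *\<^sub>R X + (\<Sum>b\<in>C. v j b *\<^sub>R b)" for j
    proof -
      have "(1 / N (Zs j)) *\<^sub>R Zs j = (1 / N (Zs j)) *\<^sub>R (\<Sum>b\<in>C. coef (Zs j) b *\<^sub>R b)"
        using rep[OF Zs(1)[of j]] by simp
      also have "\<dots> = (\<Sum>b\<in>C. v j b *\<^sub>R b)"
        by (simp add: scaleR_sum_right v_def)
      finally show ?thesis unfolding Y_def by (simp add: scaleR_right_distrib)
    qed
    define Lw where "Lw = (\<Sum>b\<in>C. w b *\<^sub>R b)"
    have "(\<lambda>n. Y (r n)) \<longlonglongrightarrow> 0 + Lw"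
      unfolding Yeq Lw_def
    proof (rule tvs_add[OF tvs])
      show "(\<lambda>n. (1 / N (Zs (r n))) *\<^sub>R X) \<longlonglongrightarrow> 0"
        using tvs_scale[OF tvs inv0 tendsto_const[of X]] by simp
      show "(\<lambda>n. \<Sum>b\<in>C. v (r n) b *\<^sub>R b) \<longlonglongrightarrow> (\<Sum>b\<in>C. w b *\<^sub>R b)"
      proof -
        have "\<forall>b\<in>C. ((\<lambda>n. v (r n) b *\<^sub>R b) \<longlongrightarrow> w b *\<^sub>R b) sequentially"
        proof
          fix b assume "b \<in> C"
          with w have "(\<lambda>n. v (r n) b) \<longlonglongrightarrow> w b" by blast
          from tvs_scale[OF tvs this tendsto_const] show "(\<lambda>n. v (r n) b *\<^sub>R b) \<longlonglongrightarrow> w b *\<^sub>R b" .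
        qed
        from tvs_sum[OF tvs finC this] show ?thesis by simp
      qed
    qed
    hence LwA: "Lw \<in> A"
      using Lim_in_closed_set[OF A2(1) trivA[of "\<lambda>n. Y (r n) \<in> A", OF YA] trivial_limit_sequentially]
      by simp
    have pv: "(\<Sum>b\<in>C. v j b * \<pi> b) = \<pi> (Zs j) / N (Zs j)" for j
      using piL[of "coef (Zs j)"] rep[OF Zs(1)[of j]] unfolding v_def
      by (simp add: sum_divide_distrib)
    have l1: "(\<lambda>n. \<Sum>b\<in>C. v (r n) b * \<pi> b) \<longlonglongrightarrow> (\<Sum>b\<in>C. w b * \<pi> b)"
      by (rule tendsto_sum) (use w in \<open>auto intro: tendsto_mult tendsto_const\<close>)
    have l2: "(\<lambda>n. \<Sum>b\<in>C. v (r n) b * \<pi> b) \<longlonglongrightarrow> 0"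
      unfolding pv
    proof (rule tendsto_sandwich[of "\<lambda>n. - K0 * (1 / N (Zs (r n)))" _ _ "\<lambda>n. K0 * (1 / N (Zs (r n)))"])
      show "\<forall>\<^sub>F n in sequentially. - K0 * (1 / N (Zs (r n))) \<le> \<pi> (Zs (r n)) / N (Zs (r n))"
      proof (rule trivA)
        fix n have "- K0 \<le> \<pi> (Zs (r n))" using Zs(3)[of "r n"] by linarith
        hence "- K0 / N (Zs (r n)) \<le> \<pi> (Zs (r n)) / N (Zs (r n))"
          using Npos[of "r n"] by (intro divide_right_mono) auto
        thus "- K0 * (1 / N (Zs (r n))) \<le> \<pi> (Zs (r n)) / N (Zs (r n))" by simp
      qed
      show "\<forall>\<^sub>F n in sequentially. \<pi> (Zs (r n)) / N (Zs (r n)) \<le> K0 * (1 / N (Zs (r n)))"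
      proof (rule trivA)
        fix n have "\<pi> (Zs (r n)) \<le> K0" using Zs(3)[of "r n"] by linarith
        hence "\<pi> (Zs (r n)) / N (Zs (r n)) \<le> K0 / N (Zs (r n))"
          using Npos[of "r n"] by (intro divide_right_mono) auto
        thus "\<pi> (Zs (r n)) / N (Zs (r n)) \<le> K0 * (1 / N (Zs (r n)))" by simp
      qed
      show "(\<lambda>n. - K0 * (1 / N (Zs (r n)))) \<longlonglongrightarrow> 0"
        using tendsto_mult[OF tendsto_const[of "-K0"] inv0] by simp
      show "(\<lambda>n. K0 * (1 / N (Zs (r n)))) \<longlonglongrightarrow> 0"
        using tendsto_mult[OF tendsto_const[of "K0"] inv0] by simp
    qed
    have "(\<Sum>b\<in>C. w b * \<pi> b) = 0" using LIMSEQ_unique[OF l1 l2] .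
    hence "\<pi> Lw = 0" unfolding Lw_def piL .
    hence "Lw \<in> A \<inter> kerM M \<pi>" using LwA LM unfolding kerM_def Lw_def by auto
    hence Lw0: "Lw = 0" using nogood by auto
    have s1: "(\<Sum>b\<in>C. \<bar>v j b\<bar>) = 1" for j
    proof -
      have "(\<Sum>b\<in>C. \<bar>v j b\<bar>) = (\<Sum>b\<in>C. \<bar>coef (Zs j) b\<bar>) / N (Zs j)"
        unfolding v_def using Npos[of j] by (simp add: sum_divide_distrib)
      thus ?thesis using Npos[of j] unfolding N_def by simp
    qed
    have "(\<lambda>n. \<Sum>b\<in>C. \<bar>v (r n) b\<bar>) \<longlonglongrightarrow> (\<Sum>b\<in>C. \<bar>w b\<bar>)"
      by (rule tendsto_sum) (use w in \<open>auto intro: tendsto_rabs\<close>)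
    hence "(\<Sum>b\<in>C. \<bar>w b\<bar>) = 1" unfolding s1 using LIMSEQ_const_iff by metis
    moreover have "\<forall>b\<in>C. w b = 0" using indep Lw0 unfolding Lw_def by blast
    ultimately show False by simp
  qed

  define \<rho> where "\<rho> = rho M \<pi> A X"
  define P where "P = prices M \<pi> A X"
  have Pne: "P \<noteq> {}" and Pbd: "bdd_below P" using A3(1) unfolding P_def by auto
  have "\<forall>n::nat. \<exists>Z. Z \<in> M \<and> X + Z \<in> A \<and> \<pi> Z < \<rho> + inverse (real (Suc n))"
  proof
    fix n
    have "Inf P < \<rho> + inverse (real (Suc n))" unfolding \<rho>_def rho_def P_def by simp
    from cInf_lessD[OF Pne this] obtain p where "p \<in> P" "p < \<rho> + inverse (real (Suc n))" by blast
    thus "\<exists>Z. Z \<in> M \<and> X + Z \<in> A \<and> \<pi> Z < \<rho> + inverse (real (Suc n))"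
      unfolding P_def prices_def by blast
  qed
  then have "\<exists>Zs. \<forall>n. Zs n \<in> M \<and> X + Zs n \<in> A \<and> \<pi> (Zs n) < \<rho> + inverse (real (Suc n))"
    by (rule choice)
  then obtain Zs where "\<forall>n. Zs n \<in> M \<and> X + Zs n \<in> A \<and> \<pi> (Zs n) < \<rho> + inverse (real (Suc n))" by blast
  hence Zs: "\<And>n. Zs n \<in> M" "\<And>n. X + Zs n \<in> A"
    "\<And>n. \<pi> (Zs n) < \<rho> + inverse (real (Suc n))" by auto
  have lowb: "\<rho> \<le> \<pi> (Zs n)" for n
  proof -
    have "\<pi> (Zs n) \<in> P" unfolding P_def prices_def using Zs by blast
    from cInf_lower[OF this Pbd] show ?thesis unfolding \<rho>_def rho_def P_def .
  qed
  have invle: "inverse (real (Suc n)) \<le> 1" for n by (simp add: inverse_le_1_iff)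
  have absb: "\<bar>\<pi> (Zs n)\<bar> \<le> \<bar>\<rho>\<bar> + 1" for n
    using lowb[of n] Zs(3)[of n] invle[of n] by linarith
  obtain K where K: "\<And>Z. Z \<in> M \<and> X + Z \<in> A \<and> \<bar>\<pi> Z\<bar> \<le> \<bar>\<rho>\<bar> + 1 \<Longrightarrow> N Z \<le> K"
    using bnd[of "\<bar>\<rho>\<bar> + 1"] by blast
  have cbK: "\<forall>b\<in>C. \<forall>n. \<bar>coef (Zs n) b\<bar> \<le> K"
  proof (intro ballI allI)
    fix b n assume "b \<in> C"
    hence "\<bar>coef (Zs n) b\<bar> \<le> N (Zs n)" by (rule cb)
    also have "\<dots> \<le> K" using K Zs(1,2) absb by blast
    finally show "\<bar>coef (Zs n) b\<bar> \<le> K" .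
  qed
  obtain r w where r: "strict_mono r" and w: "\<forall>b\<in>C. (\<lambda>n. coef (Zs (r n)) b) \<longlonglongrightarrow> w b"
    using coord_compact[OF finC cbK] by blast
  define Lw where "Lw = (\<Sum>b\<in>C. w b *\<^sub>R b)"
  have "(\<lambda>n. \<Sum>b\<in>C. coef (Zs (r n)) b *\<^sub>R b) \<longlonglongrightarrow> Lw"
  proof -
    have "\<forall>b\<in>C. ((\<lambda>n. coef (Zs (r n)) b *\<^sub>R b) \<longlongrightarrow> w b *\<^sub>R b) sequentially"
    proof
      fix b assume "b \<in> C"
      with w have "(\<lambda>n. coef (Zs (r n)) b) \<longlonglongrightarrow> w b" by blast
      from tvs_scale[OF tvs this tendsto_const] show "(\<lambda>n. coef (Zs (r n)) b *\<^sub>R b) \<longlonglongrightarrow> w b *\<^sub>R b" .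
    qed
    from tvs_sum[OF tvs finC this] show ?thesis by (simp add: Lw_def)
  qed
  hence "(\<lambda>n. Zs (r n)) \<longlonglongrightarrow> Lw" using rep[OF Zs(1)] by simp
  hence "(\<lambda>n. X + Zs (r n)) \<longlonglongrightarrow> X + Lw" using tvs_add[OF tvs tendsto_const] by blast
  hence XLA: "X + Lw \<in> A"
    using Lim_in_closed_set[OF A2(1) trivA[of "\<lambda>n. X + Zs (r n) \<in> A", OF Zs(2)] trivial_limit_sequentially]
    by simp
  have "(\<lambda>n. \<pi> (Zs n)) \<longlonglongrightarrow> \<rho>"
  proof (rule tendsto_sandwich[of "\<lambda>n. \<rho>" _ _ "\<lambda>n. \<rho> + inverse (real (Suc n))"])
    show "\<forall>\<^sub>F n in sequentially. \<rho> \<le> \<pi> (Zs n)" using lowb by simp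
    show "\<forall>\<^sub>F n in sequentially. \<pi> (Zs n) \<le> \<rho> + inverse (real (Suc n))"
      using Zs(3) by (intro always_eventually allI less_imp_le)
    show "(\<lambda>n. \<rho>) \<longlonglongrightarrow> \<rho>" by simp
    show "(\<lambda>n. \<rho> + inverse (real (Suc n))) \<longlonglongrightarrow> \<rho>"
      using tendsto_add[OF tendsto_const[of \<rho>] LIMSEQ_inverse_real_of_nat] by simp
  qed
  from LIMSEQ_subseq_LIMSEQ[OF this r] have l1: "(\<lambda>n. \<pi> (Zs (r n))) \<longlonglongrightarrow> \<rho>" by (simp add: o_def)
  have "(\<lambda>n. \<Sum>b\<in>C. coef (Zs (r n)) b * \<pi> b) \<longlonglongrightarrow> (\<Sum>b\<in>C. w b * \<pi> b)"
    by (rule tendsto_sum) (use w in \<open>auto intro: tendsto_mult tendsto_const\<close>)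
  hence "(\<lambda>n. \<pi> (Zs (r n))) \<longlonglongrightarrow> \<pi> Lw"
    unfolding Lw_def piL[symmetric] using rep[OF Zs(1)] by simp
  hence "\<pi> Lw = \<rho>" using LIMSEQ_unique[OF _ l1] by blast
  hence "Lw \<in> optR M \<pi> A X" unfolding optR_def \<rho>_def using XLA LM Lw_def by auto
  thus "optR M \<pi> A X \<noteq> {}" by blast
qed

end
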